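(* If an infinite binary word $w$ is not weak abelian periodic, then the frequencies of letters in $w$ exist.
   Context: For a finite word $u$, $|u|_a$ is the number of occurrences of the letter $a$ in $u$, and $\rho_a(u)=|u|_a/|u|$ for nonempty $u$. The frequency of a letter $a$ in an infinite word $w$ is $\lim_{n\to\infty}\rho_a(\mathrm{pref}_n(w))$ (if it exists), with $\mathrm{pref}_n(w)$ the prefix of length $n$. An infinite word $w$ over $\Sigma$ is weak abelian periodic if $w=v_0v_1v_2\cdots$ with $v_0$ finite and $v_1,v_2,\dots$ nonempty finite words such that $\rho_a(v_i)=\rho_a(v_j)$ for all $a\in\Sigma$ and all $i,j\ge1$. *)

theory Defs
  imports Complex_Main
begin

definition occ :: "'a list \<Rightarrow> 'a \<Rightarrow> nat" where
  "occ u a = count_list u a"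

definition rho :: "'a \<Rightarrow> 'a list \<Rightarrow> real" where
  "rho a u = real (occ u a) / real (length u)"

definition pref :: "nat \<Rightarrow> (nat \<Rightarrow> 'a) \<Rightarrow> 'a list" where
  "pref n w = map w [0..<n]"

definition frequency_exists :: "(nat \<Rightarrow> 'a) \<Rightarrow> 'a \<Rightarrow> bool" where
  "frequency_exists w a = convergent (\<lambda>n. rho a (pref n w))"

text \<open>w = v 0 \<cdot> v 1 \<cdot> v 2 \<cdots> (v 0 plays the role of the finite prefix v_0).\<close>
definition is_infinite_concat :: "(nat \<Rightarrow> 'a) \<Rightarrow> (nat \<Rightarrow> 'a list) \<Rightarrow> bool" where
  "is_infinite_concat w v =
     (\<forall>k. let u = concat (map v [0..<k]) in pref (length u) w = u)"

definition weak_abelian_periodic :: "(nat \<Rightarrow> 'a) \<Rightarrow> bool" where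
  "weak_abelian_periodic w =
     (\<exists>v. is_infinite_concat w v \<and> (\<forall>i\<ge>1. v i \<noteq> []) \<and>
          (\<forall>a i j. i \<ge> 1 \<longrightarrow> j \<ge> 1 \<longrightarrow> rho a (v i) = rho a (v j)))"

end

theory Submission
  imports Defs "HOL-Library.Extended_Real" "HOL-Library.Liminf_Limsup"
begin

lemma nonconv_split:
  fixes x :: "nat \<Rightarrow> real"
  assumes b: "\<And>n. 0 \<le> x n" "\<And>n. x n \<le> 1" and nc: "\<not> convergent x"
  shows "\<exists>r\<in>\<rat>. (\<forall>N. \<exists>n\<ge>N. x n < r) \<and> (\<forall>N. \<exists>n\<ge>N. r < x n)"
proof -
  define X where "X = (\<lambda>n. ereal (x n))"
  define L where "L = Liminf sequentially X"
  define U where "U = Limsup sequentially X"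
  have L0: "0 \<le> L" unfolding L_def X_def by (rule Liminf_bounded) (use b in auto)
  have U1: "U \<le> 1" unfolding U_def X_def by (rule Limsup_bounded) (use b in auto)
  have LU: "L \<le> U" unfolding L_def U_def by (rule Liminf_le_Limsup) simp
  obtain l where l: "L = ereal l" using L0 LU U1
    by (cases L) auto
  obtain u where u: "U = ereal u" using L0 LU U1
    by (cases U) auto
  show ?thesis
  proof (cases "l = u")
    case True
    have "(X \<longlongrightarrow> ereal l) sequentially"
      by (rule Liminf_eq_Limsup) (use l u True L_def U_def in auto)
    hence "x \<longlonglongrightarrow> l" unfolding X_def by simp
    hence "convergent x" by (auto simp: convergent_def)
    with nc show ?thesis by simp
  next
    case False
    with LU l u have "l < u" by simp
    then obtain r where r: "r \<in> \<rat>" "l < r" "r < u" using Rats_dense_in_real by blast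
    have 1: "\<forall>N. \<exists>n\<ge>N. x n < r"
    proof (rule ccontr)
      assume "\<not> ?thesis"
      then obtain N where "\<forall>n\<ge>N. r \<le> x n" by (auto simp: not_less)
      hence "eventually (\<lambda>n. ereal r \<le> X n) sequentially"
        unfolding X_def eventually_sequentially by auto
      hence "ereal r \<le> L" unfolding L_def by (rule Liminf_bounded)
      with l r show False by simp
    qed
    have 2: "\<forall>N. \<exists>n\<ge>N. r < x n"
    proof (rule ccontr)
      assume "\<not> ?thesis"
      then obtain N where "\<forall>n\<ge>N. x n \<le> r" by (auto simp: not_less)
      hence "eventually (\<lambda>n. X n \<le> ereal r) sequentially"
        unfolding X_def eventually_sequentially by auto
      hence "U \<le> ereal r" unfolding U_def by (rule Limsup_bounded)
      with u r show False by simp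
    qed
    show ?thesis using 1 2 r by blast
  qed
qed

lemma cross:
  fixes g :: "nat \<Rightarrow> int"
  assumes step: "\<And>n. g (Suc n) \<le> g n + d" and m: "g m \<le> 0"
  shows "m < k \<Longrightarrow> 0 < g k \<Longrightarrow> \<exists>n\<ge>m. n < k \<and> g n \<le> 0 \<and> - d < g n"
proof (induction k)
  case 0 thus ?case by simp
next
  case (Suc k)
  show ?case
  proof (cases "g k \<le> 0")
    case True
    have "- d < g k" using step[of k] Suc.prems by simp
    thus ?thesis using True Suc.prems by (intro exI[of _ k]) auto
  next
    case False
    hence "m < k" using Suc.prems m by (cases "m = k") auto
    thus ?thesis using Suc.IH False by force
  qed
qed

lemma pref_Suc: "pref (Suc n) w = pref n w @ [w n]"
  by (simp add: pref_def)

lemma pref_add: "s \<le> t \<Longrightarrow> pref t w = pref s w @ map w [s..<t]"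
  unfolding pref_def by (metis map_append le_add_diff_inverse upt_add_eq_append zero_le)

lemma length_pref[simp]: "length (pref n w) = n" by (simp add: pref_def)

lemma count_bool: "count_list xs (a::bool) + count_list xs (\<not> a) = length xs"
  by (induction xs) auto


lemma main:
  fixes w :: "nat \<Rightarrow> bool"
  assumes nf: "\<not> frequency_exists w a"
  shows "weak_abelian_periodic w"
proof -
  define F where "F n = count_list (pref n w) a" for n
  define x where "x n = rho a (pref n w)" for n
  have F_le: "F n \<le> n" for n unfolding F_def
    by (metis count_le_length length_pref)
  have x_eq: "x n = real (F n) / real n" for n
    unfolding x_def rho_def occ_def F_def by simp
  have "0 \<le> x n" for n unfolding x_eq by simp
  moreover have "x n \<le> 1" for n unfolding x_eq using F_le[of n]
    by (cases "n = 0") (auto simp: divide_le_eq)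
  moreover have "\<not> convergent x" using nf unfolding frequency_exists_def x_def by simp
  ultimately obtain r where r: "r \<in> \<rat>" "\<forall>N. \<exists>n\<ge>N. x n < r" "\<forall>N. \<exists>n\<ge>N. r < x n"
    using nonconv_split[of x] by blast
  obtain p q where pq: "q > 0" "r = of_int p / of_int q" using Rats_cases'[OF r(1)] by blast
  define g where "g n = q * int (F n) - p * int n" for n
  have Fs: "F (Suc n) = F n + (if w n = a then 1 else 0)" for n
    unfolding F_def pref_Suc by simp
  have step: "g (Suc n) \<le> g n + (q - p)" for n
    unfolding g_def Fs using pq(1) by (auto simp: algebra_simps)
  have neg: "\<forall>N. \<exists>n\<ge>N. g n \<le> 0"
  proof
    fix N obtain n where n: "n \<ge> Suc N" "x n < r" using r(2) by blast
    hence "real (F n) / real n < real_of_int p / real_of_int q" using x_eq pq by simp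
    hence "real (F n) * real_of_int q < real_of_int p * real n" using n pq(1)
      by (simp add: divide_less_eq less_divide_eq mult.commute)
    hence "real_of_int (q * int (F n)) < real_of_int (p * int n)" by (simp add: mult.commute)
    hence "g n \<le> 0" unfolding g_def by linarith
    thus "\<exists>n\<ge>N. g n \<le> 0" using n by (intro exI[of _ n]) auto
  qed
  have pos: "\<forall>N. \<exists>n\<ge>N. 0 < g n"
  proof
    fix N obtain n where n: "n \<ge> Suc N" "r < x n" using r(3) by blast
    hence "real_of_int p / real_of_int q < real (F n) / real n" using x_eq pq by simp
    hence "real_of_int p * real n < real (F n) * real_of_int q" using n pq(1)
      by (simp add: divide_less_eq less_divide_eq mult.commute)
    hence "real_of_int (p * int n) < real_of_int (q * int (F n))" by (simp add: mult.commute)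
    hence "0 < g n" unfolding g_def by linarith
    thus "\<exists>n\<ge>N. 0 < g n" using n by (intro exI[of _ n]) auto
  qed
  define d where "d = q - p"
  define S where "S = {n. g n \<in> {-d<..0}}"
  have "\<forall>N. \<exists>n\<ge>N. n \<in> S"
  proof
    fix N
    obtain m where m: "m \<ge> N" "g m \<le> 0" using neg by blast
    obtain k where k: "k \<ge> Suc m" "0 < g k" using pos by blast
    obtain n where "n \<ge> m" "n < k" "g n \<le> 0" "- d < g n"
      using cross[of g d m k] step m k unfolding d_def by fastforce
    thus "\<exists>n\<ge>N. n \<in> S" using m unfolding S_def by (intro exI[of _ n]) auto
  qed
  hence infS: "infinite S" using infinite_nat_iff_unbounded_le by blast
  have "S = (\<Union>c\<in>{-d<..0}. {n. g n = c})" unfolding S_def by auto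
  then obtain c where infT: "infinite {n. g n = c}" using infS by auto
  define T where "T = {n. g n = c}"
  define e where "e = enumerate T"
  have eT: "g (e i) = c" for i using enumerate_in_set[OF infT] unfolding e_def T_def by auto
  have emono: "i < j \<Longrightarrow> e i < e j" for i j using enumerate_mono infT unfolding e_def T_def by blast
  define v where "v i = (if i = 0 then pref (e 0) w else map w [e (i-1)..<e i])" for i
  have cc: "concat (map v [0..<Suc k]) = pref (e k) w" for k
  proof (induction k)
    case 0 thus ?case by (simp add: v_def)
  next
    case (Suc k)
    have "e k \<le> e (Suc k)" using emono[of k "Suc k"] by simp
    have vS: "v (Suc k) = map w [e k..<e (Suc k)]" unfolding v_def by simp
    have "concat (map v [0..<Suc (Suc k)]) = concat (map v [0..<Suc k]) @ v (Suc k)" by simp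
    also have "\<dots> = pref (e k) w @ map w [e k..<e (Suc k)]" using Suc.IH vS by (simp only:)
    also have "\<dots> = pref (e (Suc k)) w" using pref_add[OF \<open>e k \<le> e (Suc k)\<close>, of w] by (rule sym)
    finally show ?case .
  qed
  have conc: "is_infinite_concat w v" unfolding is_infinite_concat_def Let_def
  proof
    fix k show "pref (length (concat (map v [0..<k]))) w = concat (map v [0..<k])"
    proof (cases k)
      case 0 thus ?thesis by (simp add: pref_def)
    next
      case (Suc k') thus ?thesis by (simp only: cc length_pref)
    qed
  qed
  have ne: "\<forall>i\<ge>1. v i \<noteq> []"
  proof (intro allI impI)
    fix i :: nat assume "i \<ge> 1"
    hence "e (i - 1) < e i" using emono[of "i-1" i] by simp
    thus "v i \<noteq> []" using \<open>i \<ge> 1\<close> unfolding v_def by simp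
  qed
  have blk: "rho b (v i) = (if b = a then p / q else 1 - p / q)" if i: "i \<ge> 1" for b i
  proof -
    define s where "s = e (i - 1)"
    define t where "t = e i"
    have st: "s < t" using emono[of "i-1" i] i unfolding s_def t_def by simp
    have vi: "v i = map w [s..<t]" using i unfolding v_def s_def t_def by simp
    have Ft: "F t = F s + count_list (v i) a" unfolding F_def vi pref_add[OF less_imp_le[OF st]] by simp
    have "g t = g s" unfolding s_def t_def eT by simp
    hence "q * int (count_list (v i) a) = p * int (length (v i))"
      unfolding g_def Ft vi using st by (simp add: algebra_simps of_nat_diff)
    hence eq: "real_of_int q * real (count_list (v i) a) = real_of_int p * real (length (v i))"
      by (metis of_int_mult of_int_of_nat_eq)
    have lpos: "length (v i) > 0" unfolding vi using st by simp
    have ra: "rho a (v i) = p / q" unfolding rho_def occ_def using eq lpos pq(1)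
      by (simp add: field_simps)
    show ?thesis
    proof (cases "b = a")
      case True thus ?thesis using ra by simp
    next
      case False
      hence b: "b = (\<not> a)" by auto
      have "real (count_list (v i) b) = real (length (v i)) - real (count_list (v i) a)"
        using count_bool[of "v i" a] b by simp
      hence "rho b (v i) = 1 - rho a (v i)" unfolding rho_def occ_def using lpos
        by (simp add: field_simps)
      thus ?thesis using ra False by simp
    qed
  qed
  show ?thesis unfolding weak_abelian_periodic_def
    using conc ne blk by (intro exI[of _ v]) auto
qed

theorem corollary1:
  fixes w :: "nat \<Rightarrow> bool"
  assumes "\<not> weak_abelian_periodic w"
  shows "\<forall>a. frequency_exists w a"
  using main assms by blast

end
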